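(* Let $A$ and $B$ be 0-1 matrices of sizes $p\times q$ and $q\times r$ with $p\ge r$, and let $\ell\in[p]$. Let $T\subseteq\{0,1\}^q$ be a set of $\ell$ centers produced by a $2$-approximation algorithm for the $\ell$-center clustering of the rows of $A$, so that $\max_{i\in[p]}\min_{u\in T}\mathrm{ham}(A_{i*},u)\le 2\lambda(A,\ell,\mathrm{row})$. For each $i\in[p]$ let $cen_\ell(A_{i*})\in T$ be a center closest to $A_{i*}$ in Hamming distance (ties broken arbitrarily), and define $D_{ij}$, for $i\in[p]$, $j\in[r]$, to be the inner product of $cen_\ell(A_{i*})$ with the $j$-th column $B_{*j}$ of $B$. Let $C=AB$ be the arithmetic product. Then for all $1\le i\le p$ and $1\le j\le r$, $|C_{ij}-D_{ij}|\le 2\lambda(A,\ell,\mathrm{row})$.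
   Context: For a positive integer $r$, $[r]=\{1,\dots,r\}$. The arithmetic matrix product $C=AB$ has entries $C_{ij}=\sum_{h=1}^q A_{ih}B_{hj}$ (over the integers); the inner product of $a,b\in\{0,1\}^q$ is $\sum_h a_hb_h$. The Hamming distance $\mathrm{ham}(a,b)$ between $a,b\in\{0,1\}^q$ is the number of coordinates in which they differ. The $\ell$-center clustering problem for the rows of $A$ asks for a set $T$ of $\ell$ points of $\{0,1\}^q$ minimizing $\max_{i\in[p]}\min_{u\in T}\mathrm{ham}(A_{i*},u)$; this minimum value is denoted $\lambda(A,\ell,\mathrm{row})$, where $A_{i*}$ is the $i$-th row of $A$. *)

theory Defs
  imports Main
begin

text \<open>Vectors of {0,1}^q are functions nat => nat supported on {1..q} with values in {0,1}.
  Matrices are functions nat => nat => nat, indexed from 1.\<close>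

definition cube :: "nat \<Rightarrow> (nat \<Rightarrow> nat) set" where
  "cube q = {u. (\<forall>h\<in>{1..q}. u h \<in> {0,1}) \<and> (\<forall>h. h \<notin> {1..q} \<longrightarrow> u h = 0)}"

definition ham :: "nat \<Rightarrow> (nat \<Rightarrow> nat) \<Rightarrow> (nat \<Rightarrow> nat) \<Rightarrow> nat" where
  "ham q a b = card {h \<in> {1..q}. a h \<noteq> b h}"

definition row :: "(nat \<Rightarrow> nat \<Rightarrow> nat) \<Rightarrow> nat \<Rightarrow> nat \<Rightarrow> (nat \<Rightarrow> nat)" where
  "row A q i = (\<lambda>h. if h \<in> {1..q} then A i h else 0)"

definition col :: "(nat \<Rightarrow> nat \<Rightarrow> nat) \<Rightarrow> nat \<Rightarrow> nat \<Rightarrow> (nat \<Rightarrow> nat)" where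
  "col B q j = (\<lambda>h. if h \<in> {1..q} then B h j else 0)"

definition inner :: "nat \<Rightarrow> (nat \<Rightarrow> nat) \<Rightarrow> (nat \<Rightarrow> nat) \<Rightarrow> nat" where
  "inner q a b = (\<Sum>h=1..q. a h * b h)"

definition is01 :: "nat \<Rightarrow> nat \<Rightarrow> (nat \<Rightarrow> nat \<Rightarrow> nat) \<Rightarrow> bool" where
  "is01 m n M \<longleftrightarrow> (\<forall>i\<in>{1..m}. \<forall>j\<in>{1..n}. M i j \<in> {0,1})"

definition center_cost :: "(nat \<Rightarrow> nat \<Rightarrow> nat) \<Rightarrow> nat \<Rightarrow> nat \<Rightarrow> (nat \<Rightarrow> nat) set \<Rightarrow> nat" where
  "center_cost A p q T = Max ((\<lambda>i. Min ((\<lambda>u. ham q (row A q i) u) ` T)) ` {1..p})"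

definition lambda_row :: "(nat \<Rightarrow> nat \<Rightarrow> nat) \<Rightarrow> nat \<Rightarrow> nat \<Rightarrow> nat \<Rightarrow> nat" where
  "lambda_row A p q l = Min {center_cost A p q T | T. T \<subseteq> cube q \<and> card T = l}"

definition matmul :: "(nat \<Rightarrow> nat \<Rightarrow> nat) \<Rightarrow> (nat \<Rightarrow> nat \<Rightarrow> nat) \<Rightarrow> nat \<Rightarrow> nat \<Rightarrow> nat \<Rightarrow> nat" where
  "matmul A B q i j = (\<Sum>h=1..q. A i h * B h j)"

end

theory Submission
  imports Defs
begin

lemma sum_abs_bound:
  fixes f g :: "nat \<Rightarrow> nat"
  assumes "\<forall>h\<in>S. \<bar>int (f h) - int (g h)\<bar> \<le> (if h \<in> P then 1 else 0)" "finite S"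
  shows "\<bar>int (\<Sum>h\<in>S. f h) - int (\<Sum>h\<in>S. g h)\<bar> \<le> int (card {h \<in> S. h \<in> P})"
proof -
  have "\<bar>int (\<Sum>h\<in>S. f h) - int (\<Sum>h\<in>S. g h)\<bar> = \<bar>\<Sum>h\<in>S. (int (f h) - int (g h))\<bar>"
    by (simp add: sum_subtractf)
  also have "\<dots> \<le> (\<Sum>h\<in>S. \<bar>int (f h) - int (g h)\<bar>)" by (rule sum_abs)
  also have "\<dots> \<le> (\<Sum>h\<in>S. (if h \<in> P then 1 else 0))" using assms(1) by (intro sum_mono) auto
  also have "\<dots> = int (card {h \<in> S. h \<in> P})"
    using assms(2) by (simp add: sum.If_cases Int_def conj_commute)
  finally show ?thesis .
qed

theorem lemma1:
  fixes A B :: "nat \<Rightarrow> nat \<Rightarrow> nat" and p q r l :: nat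
    and T :: "(nat \<Rightarrow> nat) set" and cen :: "nat \<Rightarrow> (nat \<Rightarrow> nat)"
  assumes "is01 p q A" and "is01 q r B" and "p \<ge> r"
    and "l \<in> {1..p}"
    and "T \<subseteq> cube q" and "card T = l"
    and "center_cost A p q T \<le> 2 * lambda_row A p q l"
    and "\<forall>i\<in>{1..p}. cen i \<in> T \<and> (\<forall>u\<in>T. ham q (row A q i) (cen i) \<le> ham q (row A q i) u)"
    and "\<forall>i j. D i j = inner q (cen i) (col B q j)"
  shows "\<forall>i\<in>{1..p}. \<forall>j\<in>{1..r}.
           \<bar>int (matmul A B q i j) - int (D i j)\<bar> \<le> 2 * int (lambda_row A p q l)"
proof (intro ballI)
  fix i j assume i: "i \<in> {1..p}" and j: "j \<in> {1..r}"
  have cT: "cen i \<in> T" and cmin: "\<forall>u\<in>T. ham q (row A q i) (cen i) \<le> ham q (row A q i) u"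
    using assms(8) i by auto
  have fin: "finite T" using assms(4,6) by (metis atLeastAtMost_iff card.infinite not_one_le_zero)
  have cube: "\<forall>h\<in>{1..q}. cen i h \<in> {0,1}" using cT assms(5) by (auto simp: cube_def)
  have D: "D i j = (\<Sum>h=1..q. cen i h * B h j)"
    using assms(9) by (simp add: inner_def col_def)
  have "\<forall>h\<in>{1..q}. \<bar>int (A i h * B h j) - int (cen i h * B h j)\<bar>
          \<le> (if h \<in> {h. row A q i h \<noteq> cen i h} then 1 else 0)"
  proof
    fix h assume h: "h \<in> {1..q}"
    have "A i h \<in> {0,1}" using assms(1) i h by (auto simp: is01_def)
    moreover have "B h j \<in> {0,1}" using assms(2) j h by (auto simp: is01_def)
    moreover have "cen i h \<in> {0,1}" using cube h by auto
    moreover have "row A q i h = A i h" using h by (simp add: row_def)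
    ultimately show "\<bar>int (A i h * B h j) - int (cen i h * B h j)\<bar>
          \<le> (if h \<in> {h. row A q i h \<noteq> cen i h} then 1 else 0)" by auto
  qed
  from sum_abs_bound[OF this]
  have "\<bar>int (matmul A B q i j) - int (D i j)\<bar> \<le> int (ham q (row A q i) (cen i))"
    by (simp add: D matmul_def ham_def)
  also have "ham q (row A q i) (cen i) = Min ((\<lambda>u. ham q (row A q i) u) ` T)"
    using cT cmin fin by (intro Min_eqI[symmetric]) auto
  also have "\<dots> \<le> center_cost A p q T"
    unfolding center_cost_def using i by (intro Max_ge) auto
  also have "\<dots> \<le> 2 * lambda_row A p q l" by (rule assms(7))
  finally show "\<bar>int (matmul A B q i j) - int (D i j)\<bar> \<le> 2 * int (lambda_row A p q l)" by simp
qed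

end
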